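(* Let $(\mathcal X,\mathcal A,\mu)$ be a measurable space with $\sigma$-finite $\mu$, let $p_1,p_2$ be mutually absolutely continuous probability densities w.r.t. $\mu$, $B=p_1/p_2$, $\rho=\int\sqrt{p_1p_2}\,d\mu$. Fix an even integer $N$. Let $X_1,\dots,X_N$ be i.i.d. with density $p_2$ and $\bar B_N=N^{-1}\sum_{i=1}^N B(X_i)$; set $V_{(1)}=\mathrm{Var}(\bar B_N-1)\in[0,\infty]$. For $n_1+n_2=N$, let $X_{11},\dots,X_{1n_1}$ i.i.d. with density $p_1$ and $X_{21},\dots,X_{2n_2}$ i.i.d. with density $p_2$, all independent, and put $\bar B^{-1/2}_{1n_1}=n_1^{-1}\sum_i B(X_{1i})^{-1/2}$, $\bar B^{1/2}_{2n_2}=n_2^{-1}\sum_i B(X_{2i})^{1/2}$, $V_{(2)}(n_1,n_2)=\mathrm{Var}(\bar B^{1/2}_{2n_2}-\bar B^{-1/2}_{1n_1})$, and $V_{(2)}^{\mathrm{bal}}=V_{(2)}(N/2,N/2)$. Then: (i) for every mutually absolutely continuous pair $(p_1,p_2)$, $V_{(2)}^{\mathrm{bal}}=4(1-\rho^2)/N$, hence $\sup_{(p_1,p_2)\in\mathcal P_{\mathrm{ac}}}V_{(2)}^{\mathrm{bal}}\le 4/N<\infty$; (ii) whenever $\rho\le 1/2$, $V_{(2)}^{\mathrm{bal}}\le V_{(1)}$.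
   Context: Mutual absolute continuity: $p_1(x)=0\iff p_2(x)=0$ for $\mu$-a.e. $x$. $\mathcal P_{\mathrm{ac}}$ denotes the class of all pairs of mutually absolutely continuous probability densities. Variances take values in $[0,\infty]$, equal to $+\infty$ when the second moment is infinite. *)

theory Defs
  imports "HOL-Probability.Probability"
begin

definition prob_density :: "'a measure \<Rightarrow> ('a \<Rightarrow> real) \<Rightarrow> bool" where
  "prob_density M p \<longleftrightarrow> p \<in> borel_measurable M \<and> (\<forall>x\<in>space M. 0 \<le> p x)
     \<and> (\<integral>\<^sup>+ x. ennreal (p x) \<partial>M) = 1"

definition Pac :: "'a measure \<Rightarrow> (('a \<Rightarrow> real) \<times> ('a \<Rightarrow> real)) set" where
  "Pac M = {(p1, p2). prob_density M p1 \<and> prob_density M p2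
             \<and> (AE x in M. p1 x = 0 \<longleftrightarrow> p2 x = 0)}"

definition lik_ratio :: "('a \<Rightarrow> real) \<Rightarrow> ('a \<Rightarrow> real) \<Rightarrow> 'a \<Rightarrow> real" where
  "lik_ratio p1 p2 x = p1 x / p2 x"

definition bhatt :: "'a measure \<Rightarrow> ('a \<Rightarrow> real) \<Rightarrow> ('a \<Rightarrow> real) \<Rightarrow> real" where
  "bhatt M p1 p2 = (\<integral>x. sqrt (p1 x * p2 x) \<partial>M)"

definition ext_variance :: "'b measure \<Rightarrow> ('b \<Rightarrow> real) \<Rightarrow> ennreal" where
  "ext_variance P f = (if integrable P (\<lambda>x. (f x)\<^sup>2)
      then ennreal (prob_space.variance P f) else \<infinity>)"

definition iid_sample :: "'a measure \<Rightarrow> ('a \<Rightarrow> real) \<Rightarrow> nat \<Rightarrow> (nat \<Rightarrow> 'a) measure" where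
  "iid_sample M p n = PiM {..<n} (\<lambda>_. density M (\<lambda>x. ennreal (p x)))"

definition V1 :: "'a measure \<Rightarrow> ('a \<Rightarrow> real) \<Rightarrow> ('a \<Rightarrow> real) \<Rightarrow> nat \<Rightarrow> ennreal" where
  "V1 M p1 p2 N = ext_variance (iid_sample M p2 N)
     (\<lambda>X. (1 / real N) * (\<Sum>i<N. lik_ratio p1 p2 (X i)) - 1)"

definition V2 :: "'a measure \<Rightarrow> ('a \<Rightarrow> real) \<Rightarrow> ('a \<Rightarrow> real) \<Rightarrow> nat \<Rightarrow> nat \<Rightarrow> ennreal" where
  "V2 M p1 p2 n1 n2 = ext_variance (iid_sample M p1 n1 \<Otimes>\<^sub>M iid_sample M p2 n2)
     (\<lambda>(X1, X2). (1 / real n2) * (\<Sum>i<n2. lik_ratio p1 p2 (X2 i) powr (1/2))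
               - (1 / real n1) * (\<Sum>i<n1. lik_ratio p1 p2 (X1 i) powr (-1/2)))"

definition V2_bal :: "'a measure \<Rightarrow> ('a \<Rightarrow> real) \<Rightarrow> ('a \<Rightarrow> real) \<Rightarrow> nat \<Rightarrow> ennreal" where
  "V2_bal M p1 p2 N = V2 M p1 p2 (N div 2) (N div 2)"

end

theory Submission
  imports Defs
begin


lemma distr_pair_snd':
  assumes "prob_space P" "prob_space R"
  shows "distr (P \<Otimes>\<^sub>M R) R snd = R"
proof (intro measure_eqI)
  interpret PP: prob_space P by fact
  interpret RR: prob_space R by fact
  interpret pair_prob_space P R by unfold_locales
  fix A assume A: "A \<in> sets (distr (P \<Otimes>\<^sub>M R) R snd)"
  from A have "emeasure (distr (P \<Otimes>\<^sub>M R) R snd) A = emeasure (P \<Otimes>\<^sub>M R) (space P \<times> A)"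
    by (auto simp add: emeasure_distr space_pair_measure dest: sets.sets_into_space intro!: arg_cong2[where f=emeasure])
  with A show "emeasure (distr (P \<Otimes>\<^sub>M R) R snd) A = emeasure R A"
    by (simp add: RR.emeasure_pair_measure_Times PP.emeasure_space_1)
qed simp

lemma pair_component:
  fixes u :: "'a \<Rightarrow> real" and w :: "'b \<Rightarrow> real"
  assumes "prob_space P" "prob_space R"
  shows "integrable P u \<Longrightarrow> integrable (P \<Otimes>\<^sub>M R) (\<lambda>z. u (fst z))"
    and "integrable P u \<Longrightarrow> (\<integral>z. u (fst z) \<partial>(P \<Otimes>\<^sub>M R)) = (\<integral>x. u x \<partial>P)"
    and "integrable R w \<Longrightarrow> integrable (P \<Otimes>\<^sub>M R) (\<lambda>z. w (snd z))"
    and "integrable R w \<Longrightarrow> (\<integral>z. w (snd z) \<partial>(P \<Otimes>\<^sub>M R)) = (\<integral>x. w x \<partial>R)"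
proof -
  interpret PP: prob_space P by fact
  interpret RR: prob_space R by fact
  have d1: "distr (P \<Otimes>\<^sub>M R) P fst = P" by (rule RR.distr_pair_fst)
  have d2: "distr (P \<Otimes>\<^sub>M R) R snd = R" by (rule distr_pair_snd'[OF assms])
  show "integrable P u \<Longrightarrow> integrable (P \<Otimes>\<^sub>M R) (\<lambda>z. u (fst z))"
    using integrable_distr_eq[of fst "P \<Otimes>\<^sub>M R" P u] d1 by simp
  show "integrable P u \<Longrightarrow> (\<integral>z. u (fst z) \<partial>(P \<Otimes>\<^sub>M R)) = (\<integral>x. u x \<partial>P)"
    using integral_distr[of fst "P \<Otimes>\<^sub>M R" P u] d1 by simp
  show "integrable R w \<Longrightarrow> integrable (P \<Otimes>\<^sub>M R) (\<lambda>z. w (snd z))"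
    using integrable_distr_eq[of snd "P \<Otimes>\<^sub>M R" R w] d2 by simp
  show "integrable R w \<Longrightarrow> (\<integral>z. w (snd z) \<partial>(P \<Otimes>\<^sub>M R)) = (\<integral>x. w x \<partial>R)"
    using integral_distr[of snd "P \<Otimes>\<^sub>M R" R w] d2 by simp
qed

lemma pair_cross:
  fixes u :: "'a \<Rightarrow> real" and w :: "'b \<Rightarrow> real"
  assumes "prob_space P" "prob_space R" "integrable P u" "integrable R w"
  shows "integrable (P \<Otimes>\<^sub>M R) (\<lambda>z. u (fst z) * w (snd z))"
    and "(\<integral>z. u (fst z) * w (snd z) \<partial>(P \<Otimes>\<^sub>M R)) = (\<integral>x. u x \<partial>P) * (\<integral>y. w y \<partial>R)"
proof -
  interpret PP: prob_space P by fact
  interpret RR: prob_space R by fact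
  interpret PR: pair_sigma_finite P R by unfold_locales
  have [measurable]: "u \<in> borel_measurable P" "w \<in> borel_measurable R" using assms by auto
  have "(\<integral>\<^sup>+ z. ennreal (norm (u (fst z) * w (snd z))) \<partial>(P \<Otimes>\<^sub>M R))
      = (\<integral>\<^sup>+ x. \<integral>\<^sup>+ y. ennreal (norm (u x)) * ennreal (norm (w y)) \<partial>R \<partial>P)"
    by (subst RR.nn_integral_fst[symmetric]) (auto simp: abs_mult ennreal_mult)
  also have "\<dots> = (\<integral>\<^sup>+ x. ennreal (norm (u x)) * (\<integral>\<^sup>+ y. ennreal (norm (w y)) \<partial>R) \<partial>P)"
    by (subst nn_integral_cmult) auto
  also have "\<dots> = (\<integral>\<^sup>+ x. ennreal (norm (u x)) \<partial>P) * (\<integral>\<^sup>+ y. ennreal (norm (w y)) \<partial>R)"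
    by (subst nn_integral_multc) auto
  also have "\<dots> < \<infinity>"
    using assms(3,4) by (simp add: integrable_iff_bounded ennreal_mult_less_top)
  finally show I: "integrable (P \<Otimes>\<^sub>M R) (\<lambda>z. u (fst z) * w (snd z))"
    by (simp add: integrable_iff_bounded)
  have "(\<integral>z. u (fst z) * w (snd z) \<partial>(P \<Otimes>\<^sub>M R)) = (\<integral>x. (\<integral>y. u x * w y \<partial>R) \<partial>P)"
    using PR.integral_fst'[OF I] by simp
  also have "\<dots> = (\<integral>x. u x * (\<integral>y. w y \<partial>R) \<partial>P)" by simp
  also have "\<dots> = (\<integral>x. u x \<partial>P) * (\<integral>y. w y \<partial>R)" by simp
  finally show "(\<integral>z. u (fst z) * w (snd z) \<partial>(P \<Otimes>\<^sub>M R)) = (\<integral>x. u x \<partial>P) * (\<integral>y. w y \<partial>R)" .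
qed

lemma pair_var:
  fixes u :: "'a \<Rightarrow> real" and w :: "'b \<Rightarrow> real"
  assumes P: "prob_space P" and R: "prob_space R"
    and u: "integrable P u" "integrable P (\<lambda>x. (u x)\<^sup>2)"
    and w: "integrable R w" "integrable R (\<lambda>x. (w x)\<^sup>2)"
  shows "integrable (P \<Otimes>\<^sub>M R) (\<lambda>z. (w (snd z) - u (fst z))\<^sup>2)"
    and "prob_space.variance (P \<Otimes>\<^sub>M R) (\<lambda>z. w (snd z) - u (fst z))
         = prob_space.variance P u + prob_space.variance R w"
proof -
  interpret PP: prob_space P by fact
  interpret RR: prob_space R by fact
  interpret Q: prob_space "P \<Otimes>\<^sub>M R" by (rule prob_space_pair) fact+
  note pc = pair_component[OF P R] and px = pair_cross[OF P R]
  have eq1: "(\<lambda>z. (w (snd z) - u (fst z))\<^sup>2) = (\<lambda>z. (w (snd z))\<^sup>2 + (u (fst z))\<^sup>2 - 2 * (u (fst z) * w (snd z)))"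
    by (auto simp: power2_eq_square algebra_simps)
  show "integrable (P \<Otimes>\<^sub>M R) (\<lambda>z. (w (snd z) - u (fst z))\<^sup>2)"
    unfolding eq1 using pc(1)[OF u(2)] pc(3)[OF w(2)] px(1)[OF u(1) w(1)] by auto
  define a where "a = (\<integral>x. u x \<partial>P)"
  define b where "b = (\<integral>x. w x \<partial>R)"
  have ua: "integrable P (\<lambda>x. u x - a)" "integrable P (\<lambda>x. (u x - a)\<^sup>2)"
    using u by (auto simp: power2_diff)
  have wb: "integrable R (\<lambda>x. w x - b)" "integrable R (\<lambda>x. (w x - b)\<^sup>2)"
    using w by (auto simp: power2_diff)
  have ua0: "(\<integral>x. u x - a \<partial>P) = 0" using u by (simp add: a_def PP.prob_space)
  have Ef: "(\<integral>z. w (snd z) - u (fst z) \<partial>(P \<Otimes>\<^sub>M R)) = b - a"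
    using pc(1,2)[OF u(1)] pc(3,4)[OF w(1)] by (simp add: a_def b_def)
  have eq2: "(\<lambda>z. (w (snd z) - u (fst z) - (b - a))\<^sup>2) =
     (\<lambda>z. (w (snd z) - b)\<^sup>2 + (u (fst z) - a)\<^sup>2 - 2 * ((u (fst z) - a) * (w (snd z) - b)))"
    by (auto simp: power2_eq_square algebra_simps)
  have "prob_space.variance (P \<Otimes>\<^sub>M R) (\<lambda>z. w (snd z) - u (fst z))
      = (\<integral>z. (w (snd z) - b)\<^sup>2 + (u (fst z) - a)\<^sup>2 - 2 * ((u (fst z) - a) * (w (snd z) - b)) \<partial>(P \<Otimes>\<^sub>M R))"
    unfolding Ef eq2 ..
  also have "\<dots> = (\<integral>x. (w x - b)\<^sup>2 \<partial>R) + (\<integral>x. (u x - a)\<^sup>2 \<partial>P) - 2 * ((\<integral>x. u x - a \<partial>P) * (\<integral>x. w x - b \<partial>R))"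
    using pc(1,2)[OF ua(2)] pc(3,4)[OF wb(2)] px[OF ua(1) wb(1)] by simp
  also have "\<dots> = prob_space.variance P u + prob_space.variance R w"
    using ua0 by (simp add: a_def b_def)
  finally show "prob_space.variance (P \<Otimes>\<^sub>M R) (\<lambda>z. w (snd z) - u (fst z))
         = prob_space.variance P u + prob_space.variance R w" .
qed

lemma iid_comp:
  fixes phi :: "'a \<Rightarrow> real"
  assumes P: "prob_space P" and I: "i \<in> I" and phi: "integrable P phi"
  shows "integrable (PiM I (\<lambda>_. P)) (\<lambda>X. phi (X i))"
    and "(\<integral>X. phi (X i) \<partial>PiM I (\<lambda>_. P)) = (\<integral>x. phi x \<partial>P)"
proof -
  have d: "distr (PiM I (\<lambda>_. P)) P (\<lambda>X. X i) = P"
    using distr_PiM_component[of I "\<lambda>_. P" i] P I by simp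
  have m: "(\<lambda>X. X i) \<in> measurable (PiM I (\<lambda>_. P)) P" using I by simp
  show "integrable (PiM I (\<lambda>_. P)) (\<lambda>X. phi (X i))"
    using integrable_distr_eq[OF m, of phi] d phi by simp
  show "(\<integral>X. phi (X i) \<partial>PiM I (\<lambda>_. P)) = (\<integral>x. phi x \<partial>P)"
    using integral_distr[OF m, of phi] d phi by simp
qed

lemma iid_cross:
  fixes phi psi :: "'a \<Rightarrow> real"
  assumes P: "prob_space P" and I: "finite I" "i \<in> I" "j \<in> I" "i \<noteq> j"
    and phi: "integrable P phi" and psi: "integrable P psi"
  shows "integrable (PiM I (\<lambda>_. P)) (\<lambda>X. phi (X i) * psi (X j))"
    and "(\<integral>X. phi (X i) * psi (X j) \<partial>PiM I (\<lambda>_. P)) = (\<integral>x. phi x \<partial>P) * (\<integral>x. psi x \<partial>P)"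
proof -
  interpret PP: prob_space P by fact
  interpret PS: product_sigma_finite "\<lambda>_. P"
    by (simp add: product_sigma_finite_def PP.sigma_finite_measure_axioms)
  define f where "f = (\<lambda>k x. if k = i then phi x else if k = j then psi x else (1::real))"
  have fi: "integrable P (f k)" for k using phi psi by (cases "k = i"; cases "k = j") (auto simp: f_def)
  have pr: "(\<Prod>k\<in>I. f k (X k)) = phi (X i) * psi (X j)" for X
  proof -
    have "(\<Prod>k\<in>I. f k (X k)) = (\<Prod>k\<in>I. (if k = i then phi (X k) else 1) * (if k = j then psi (X k) else 1))"
      using I(4) by (intro prod.cong) (auto simp: f_def)
    also have "\<dots> = phi (X i) * psi (X j)"
      using I by (simp add: prod.distrib prod.delta)
    finally show ?thesis .
  qed
  have ip: "(\<Prod>k\<in>I. integral\<^sup>L P (f k)) = (\<integral>x. phi x \<partial>P) * (\<integral>x. psi x \<partial>P)"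
  proof -
    have "(\<Prod>k\<in>I. integral\<^sup>L P (f k)) = (\<Prod>k\<in>I. (if k = i then integral\<^sup>L P phi else 1) * (if k = j then integral\<^sup>L P psi else 1))"
      using I(4) by (intro prod.cong) (auto simp: f_def PP.prob_space)
    also have "\<dots> = integral\<^sup>L P phi * integral\<^sup>L P psi"
      using I by (simp add: prod.distrib prod.delta)
    finally show ?thesis .
  qed
  show "integrable (PiM I (\<lambda>_. P)) (\<lambda>X. phi (X i) * psi (X j))"
    using PS.product_integrable_prod[OF I(1), of f, OF fi] by (simp add: pr)
  show "(\<integral>X. phi (X i) * psi (X j) \<partial>PiM I (\<lambda>_. P)) = (\<integral>x. phi x \<partial>P) * (\<integral>x. psi x \<partial>P)"
    using PS.product_integral_prod[OF I(1), of f, OF fi] by (simp add: pr ip)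
qed

lemma iid_mean:
  fixes g :: "'a \<Rightarrow> real" and n :: nat
  assumes P: "prob_space P" and g: "integrable P g" "integrable P (\<lambda>x. (g x)\<^sup>2)" and n: "n > 0"
  defines "S \<equiv> (\<lambda>X. (1 / real n) * (\<Sum>i<n. g (X i)))"
  shows "integrable (PiM {..<n} (\<lambda>_. P)) S"
    and "integrable (PiM {..<n} (\<lambda>_. P)) (\<lambda>X. (S X)\<^sup>2)"
    and "(\<integral>X. S X \<partial>PiM {..<n} (\<lambda>_. P)) = (\<integral>x. g x \<partial>P)"
    and "prob_space.variance (PiM {..<n} (\<lambda>_. P)) S = prob_space.variance P g / real n"
proof -
  define Q where "Q = PiM {..<n} (\<lambda>_. P)"
  interpret PP: prob_space P by fact
  interpret Q: prob_space Q unfolding Q_def by (rule prob_space_PiM) (use P in auto)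
  define a where "a = (\<integral>x. g x \<partial>P)"
  define V where "V = prob_space.variance P g"
  define h where "h = (\<lambda>x. g x - a)"
  have h: "integrable P h" "integrable P (\<lambda>x. (h x)\<^sup>2)"
    using g by (auto simp: power2_diff h_def)
  have h0: "(\<integral>x. h x \<partial>P) = 0" using g by (simp add: h_def a_def PP.prob_space)
  have hV: "(\<integral>x. (h x)\<^sup>2 \<partial>P) = V" by (simp add: h_def a_def V_def)
  have hh: "integrable Q (\<lambda>X. h (X i) * h (X j)) \<and> (\<integral>X. h (X i) * h (X j) \<partial>Q) = (if i = j then V else 0)"
    if "i < n" "j < n" for i j
  proof (cases "i = j")
    case True
    then show ?thesis using iid_comp[OF P _ h(2), of i "{..<n}"] that hV
      by (simp add: Q_def power2_eq_square)
  next
    case False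
    then show ?thesis using iid_cross[OF P _ _ _ False h(1) h(1), of "{..<n}"] that h0
      by (simp add: Q_def)
  qed
  define T where "T = (\<lambda>X. \<Sum>i<n. h (X i))"
  have T2: "(T X)\<^sup>2 = (\<Sum>i<n. \<Sum>j<n. h (X i) * h (X j))" for X
    by (simp add: T_def power2_eq_square sum_product)
  have T2i: "integrable Q (\<lambda>X. (T X)\<^sup>2)"
    unfolding T2 apply (rule Bochner_Integration.integrable_sum) apply (rule Bochner_Integration.integrable_sum) using hh by auto
  have "(\<integral>X. (T X)\<^sup>2 \<partial>Q) = (\<Sum>i<n. \<Sum>j<n. (\<integral>X. h (X i) * h (X j) \<partial>Q))"
    unfolding T2
    apply (subst Bochner_Integration.integral_sum)
    subgoal using hh by (intro Bochner_Integration.integrable_sum) auto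
    apply (rule sum.cong, rule refl)
    apply (subst Bochner_Integration.integral_sum)
    using hh by auto
  also have "\<dots> = (\<Sum>i<n. \<Sum>j<n. (if i = j then V else 0))"
    using hh by (intro sum.cong) auto
  also have "\<dots> = real n * V" by simp
  finally have T2v: "(\<integral>X. (T X)\<^sup>2 \<partial>Q) = real n * V" .
  have gi: "integrable Q (\<lambda>X. g (X i))" "(\<integral>X. g (X i) \<partial>Q) = a" if "i < n" for i
    using iid_comp[OF P _ g(1), of i "{..<n}"] that by (auto simp: Q_def a_def)
  have Sa: "S X = a + T X / real n" for X
  proof -
    have "(\<Sum>i<n. g (X i)) = (\<Sum>i<n. h (X i) + a)" by (simp add: h_def)
    also have "\<dots> = T X + real n * a" by (simp add: sum.distrib T_def)
    finally show ?thesis using n by (simp add: S_def field_simps)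
  qed
  show SI: "integrable (PiM {..<n} (\<lambda>_. P)) S"
    unfolding S_def Q_def[symmetric] using gi by (intro integrable_mult_right Bochner_Integration.integrable_sum) auto
  have Ti: "integrable Q T" unfolding T_def
    using iid_comp(1)[OF P _ h(1), of _ "{..<n}"] by (intro Bochner_Integration.integrable_sum) (auto simp: Q_def)
  have S2: "(\<lambda>X. (S X)\<^sup>2) = (\<lambda>X. a\<^sup>2 + (2 * a / real n) * T X + (T X)\<^sup>2 / (real n)\<^sup>2)"
    unfolding Sa using n by (auto simp: power2_eq_square field_simps)
  show "integrable (PiM {..<n} (\<lambda>_. P)) (\<lambda>X. (S X)\<^sup>2)"
    unfolding Q_def[symmetric] S2 using Ti T2i by auto
  have ES: "(\<integral>X. S X \<partial>Q) = a"
  proof -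
    have "(\<integral>X. S X \<partial>Q) = (1 / real n) * (\<Sum>i<n. (\<integral>X. g (X i) \<partial>Q))"
      unfolding S_def using gi by (simp add: Bochner_Integration.integral_sum)
    also have "\<dots> = a" using gi(2) n by simp
    finally show ?thesis .
  qed
  then show "(\<integral>X. S X \<partial>PiM {..<n} (\<lambda>_. P)) = (\<integral>x. g x \<partial>P)" by (simp add: Q_def a_def)
  have "Q.variance S = (\<integral>X. (T X)\<^sup>2 / (real n)\<^sup>2 \<partial>Q)"
    unfolding ES by (simp add: Sa power_divide)
  also have "\<dots> = V / real n" using T2v n by (simp add: power2_eq_square)
  finally show "prob_space.variance (PiM {..<n} (\<lambda>_. P)) S = prob_space.variance P g / real n"
    by (simp add: Q_def V_def)
qed



lemma pw1: fixes a b :: real assumes "0 \<le> a" "0 \<le> b"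
  shows "b * (a/b) powr (1/2) = sqrt (a*b)"
proof (cases "b = 0")
  case False
  then have b: "b > 0" using assms by auto
  have "(a/b) powr (1/2) = sqrt a / sqrt b" using assms by (simp add: powr_half_sqrt real_sqrt_divide)
  moreover have "b = sqrt b * sqrt b" using b by simp
  ultimately have "b * (a/b) powr (1/2) = (sqrt b * sqrt b) * (sqrt a / sqrt b)" by simp
  also have "\<dots> = sqrt a * sqrt b"
  proof -
    have h: "\<And>y z::real. y \<noteq> 0 \<Longrightarrow> (y*y)*(z/y) = z*y" by (simp add: field_simps)
    show ?thesis using b by (intro h) simp
  qed
  finally have "b * (a/b) powr (1/2) = sqrt a * sqrt b" .
  then show ?thesis by (simp add: real_sqrt_mult)
qed simp

lemma pw2: fixes a b :: real assumes "0 \<le> a" "0 \<le> b"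
  shows "a * (a/b) powr (-1/2) = sqrt (a*b)"
proof (cases "a = 0 \<or> b = 0")
  case False
  then have a: "a > 0" and b: "b > 0" using assms by auto
  have "(a/b) powr (-1/2) = 1 / (a/b) powr (1/2)"
    using a b by (simp add: powr_minus_divide[symmetric])
  also have "\<dots> = sqrt b / sqrt a" using a b by (simp add: powr_half_sqrt real_sqrt_divide)
  finally have e: "(a/b) powr (-1/2) = sqrt b / sqrt a" .
  have "a = sqrt a * sqrt a" using a by simp
  then have "a * (a/b) powr (-1/2) = sqrt a * sqrt b" using a unfolding e by (simp add: field_simps)
  then show ?thesis by (simp add: real_sqrt_mult)
qed auto

lemma pw3: fixes a b :: real assumes "0 \<le> a" "0 \<le> b"
  shows "b * ((a/b) powr (1/2))\<^sup>2 = (if b = 0 then 0 else a)"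
  using assms by (simp add: powr_half_sqrt)

lemma pw4: fixes a b :: real assumes "0 \<le> a" "0 \<le> b"
  shows "a * ((a/b) powr (-1/2))\<^sup>2 = (if a = 0 \<or> b = 0 then 0 else b)"
proof (cases "a = 0 \<or> b = 0")
  case False
  then have a: "a > 0" and b: "b > 0" using assms by auto
  have "(a/b) powr (-1/2) = 1 / (a/b) powr (1/2)"
    using a b by (simp add: powr_minus_divide[symmetric])
  also have "\<dots> = sqrt b / sqrt a" using a b by (simp add: powr_half_sqrt real_sqrt_divide)
  finally have e: "(a/b) powr (-1/2) = sqrt b / sqrt a" .
  show ?thesis using a b unfolding e by (simp add: power_divide)
qed auto

lemma pw5: fixes r rho :: real assumes "0 \<le> r" "0 < rho"
  shows "3 * rho * r\<^sup>2 \<le> 2 * r + rho^3 * r^4"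
proof -
  have "0 \<le> (rho * r) * (rho * r - 1)\<^sup>2 * (rho * r + 2)"
    using assms by (intro mult_nonneg_nonneg) auto
  also have "(rho * r) * (rho * r - 1)\<^sup>2 * (rho * r + 2) = rho * (2 * r + rho^3 * r^4 - 3 * rho * r\<^sup>2)"
    by (simp add: power2_eq_square power3_eq_cube power4_eq_xxxx algebra_simps)
  finally show ?thesis using assms by (simp add: zero_le_mult_iff)
qed



lemma dens:
  fixes p :: "'a \<Rightarrow> real"
  assumes "prob_density M p"
  shows "prob_space (density M (\<lambda>x. ennreal (p x)))"
    and "integrable M p" and "(\<integral>x. p x \<partial>M) = 1"
    and "f \<in> borel_measurable M \<Longrightarrow> integrable (density M (\<lambda>x. ennreal (p x))) f \<longleftrightarrow> integrable M (\<lambda>x. p x * f x)"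
    and "f \<in> borel_measurable M \<Longrightarrow> (\<integral>x. f x \<partial>density M (\<lambda>x. ennreal (p x))) = (\<integral>x. p x * f x \<partial>M)"
proof -
  have pm[measurable]: "p \<in> borel_measurable M" and nn: "\<And>x. x \<in> space M \<Longrightarrow> 0 \<le> p x"
    and one: "(\<integral>\<^sup>+ x. ennreal (p x) \<partial>M) = 1"
    using assms by (auto simp: prob_density_def)
  show "prob_space (density M (\<lambda>x. ennreal (p x)))"
  proof (rule prob_spaceI)
    have "emeasure (density M (\<lambda>x. ennreal (p x))) (space M) = (\<integral>\<^sup>+ x. ennreal (p x) * indicator (space M) x \<partial>M)"
      by (rule emeasure_density) auto
    also have "\<dots> = (\<integral>\<^sup>+ x. ennreal (p x) \<partial>M)"
      by (rule nn_integral_cong) auto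
    finally show "emeasure (density M (\<lambda>x. ennreal (p x))) (space (density M (\<lambda>x. ennreal (p x)))) = 1"
      using one by simp
  qed
  show I: "integrable M p"
    by (rule integrableI_nonneg) (use nn one in auto)
  have "ennreal (\<integral>x. p x \<partial>M) = 1"
    using nn_integral_eq_integral[OF I] nn one by simp
  then show "(\<integral>x. p x \<partial>M) = 1"
    using nn by (simp add: ennreal_eq_1)
  show "f \<in> borel_measurable M \<Longrightarrow> integrable (density M (\<lambda>x. ennreal (p x))) f \<longleftrightarrow> integrable M (\<lambda>x. p x * f x)"
    using integrable_density[of f M p] nn by simp
  show "f \<in> borel_measurable M \<Longrightarrow> (\<integral>x. f x \<partial>density M (\<lambda>x. ennreal (p x))) = (\<integral>x. p x * f x \<partial>M)"
    using integral_density[of f M p] nn by simp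
qed

lemma moments:
  fixes p1 p2 :: "'a \<Rightarrow> real"
  assumes Pac: "(p1, p2) \<in> Pac M"
  defines "P1 \<equiv> density M (\<lambda>x. ennreal (p1 x))" and "P2 \<equiv> density M (\<lambda>x. ennreal (p2 x))"
  shows "prob_space P1" "prob_space P2"
    and "integrable P1 (\<lambda>x. lik_ratio p1 p2 x powr (-1/2))"
    and "integrable P1 (\<lambda>x. (lik_ratio p1 p2 x powr (-1/2))\<^sup>2)"
    and "(\<integral>x. lik_ratio p1 p2 x powr (-1/2) \<partial>P1) = bhatt M p1 p2"
    and "(\<integral>x. (lik_ratio p1 p2 x powr (-1/2))\<^sup>2 \<partial>P1) = 1"
    and "integrable P2 (\<lambda>x. lik_ratio p1 p2 x powr (1/2))"
    and "integrable P2 (\<lambda>x. (lik_ratio p1 p2 x powr (1/2))\<^sup>2)"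
    and "(\<integral>x. lik_ratio p1 p2 x powr (1/2) \<partial>P2) = bhatt M p1 p2"
    and "(\<integral>x. (lik_ratio p1 p2 x powr (1/2))\<^sup>2 \<partial>P2) = 1"
    and "integrable P2 (lik_ratio p1 p2)"
    and "(\<integral>x. lik_ratio p1 p2 x \<partial>P2) = 1"
    and "integrable M (\<lambda>x. sqrt (p1 x * p2 x))"
proof -
  have d1: "prob_density M p1" and d2: "prob_density M p2"
    and ac: "AE x in M. p1 x = 0 \<longleftrightarrow> p2 x = 0"
    using Pac by (auto simp: Pac_def)
  have [measurable]: "p1 \<in> borel_measurable M" "p2 \<in> borel_measurable M"
    using d1 d2 by (auto simp: prob_density_def)
  have nn1: "\<And>x. x \<in> space M \<Longrightarrow> 0 \<le> p1 x" and nn2: "\<And>x. x \<in> space M \<Longrightarrow> 0 \<le> p2 x"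
    using d1 d2 by (auto simp: prob_density_def)
  have Bm[measurable]: "lik_ratio p1 p2 \<in> borel_measurable M"
    unfolding lik_ratio_def by measurable
  note D1 = dens[OF d1, folded P1_def] and D2 = dens[OF d2, folded P2_def]
  show "prob_space P1" "prob_space P2" using D1(1) D2(1) .
  have sq: "integrable M (\<lambda>x. sqrt (p1 x * p2 x))"
  proof (rule Bochner_Integration.integrable_bound[of _ "\<lambda>x. p1 x + p2 x"])
    show "integrable M (\<lambda>x. p1 x + p2 x)" using D1(2) D2(2) by simp
    show "AE x in M. norm (sqrt (p1 x * p2 x)) \<le> norm (p1 x + p2 x)"
    proof (rule AE_I2)
      fix x assume x: "x \<in> space M"
      have "sqrt (p1 x * p2 x) \<le> (p1 x + p2 x) / 2" using nn1[OF x] nn2[OF x] by (rule arith_geo_mean_sqrt)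
      then show "norm (sqrt (p1 x * p2 x)) \<le> norm (p1 x + p2 x)" using nn1[OF x] nn2[OF x] by simp
    qed
  qed simp
  then show "integrable M (\<lambda>x. sqrt (p1 x * p2 x))" .
  have r: "bhatt M p1 p2 = (\<integral>x. sqrt (p1 x * p2 x) \<partial>M)" by (simp add: bhatt_def)
  have e1: "\<And>x. x \<in> space M \<Longrightarrow> p1 x * lik_ratio p1 p2 x powr (-1/2) = sqrt (p1 x * p2 x)"
    using nn1 nn2 pw2 by (simp add: lik_ratio_def)
  have e2: "AE x in M. p1 x * (lik_ratio p1 p2 x powr (-1/2))\<^sup>2 = p2 x"
    using ac by (rule AE_mp) (use nn1 nn2 pw4 in \<open>auto simp: lik_ratio_def\<close>)
  have "integrable M (\<lambda>x. p1 x * lik_ratio p1 p2 x powr (-1/2))"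
    using sq by (subst Bochner_Integration.integrable_cong[OF refl e1]) auto
  then show "integrable P1 (\<lambda>x. lik_ratio p1 p2 x powr (-1/2))"
    using D1(4)[of "\<lambda>x. lik_ratio p1 p2 x powr (-1/2)"] by simp
  have "(\<integral>x. lik_ratio p1 p2 x powr (-1/2) \<partial>P1) = (\<integral>x. p1 x * lik_ratio p1 p2 x powr (-1/2) \<partial>M)"
    using D1(5)[of "\<lambda>x. lik_ratio p1 p2 x powr (-1/2)"] by simp
  also have "\<dots> = bhatt M p1 p2" unfolding r by (rule Bochner_Integration.integral_cong[OF refl e1])
  finally show "(\<integral>x. lik_ratio p1 p2 x powr (-1/2) \<partial>P1) = bhatt M p1 p2" .
  show "integrable P1 (\<lambda>x. (lik_ratio p1 p2 x powr (-1/2))\<^sup>2)"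
    by (subst D1(4)) (simp, subst Bochner_Integration.integrable_cong_AE[OF _ _ e2], auto simp: D2(2))
  show "(\<integral>x. (lik_ratio p1 p2 x powr (-1/2))\<^sup>2 \<partial>P1) = 1"
    by (subst D1(5)) (simp, subst Bochner_Integration.integral_cong_AE[OF _ _ e2], auto simp: D2(3))
  have f1: "\<And>x. x \<in> space M \<Longrightarrow> p2 x * lik_ratio p1 p2 x powr (1/2) = sqrt (p1 x * p2 x)"
    using nn1 nn2 pw1 by (simp add: lik_ratio_def)
  have f2: "AE x in M. p2 x * (lik_ratio p1 p2 x powr (1/2))\<^sup>2 = p1 x"
    using ac by (rule AE_mp) (use nn1 nn2 pw3 in \<open>auto simp: lik_ratio_def\<close>)
  have f3: "AE x in M. p2 x * lik_ratio p1 p2 x = p1 x"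
    using ac by (rule AE_mp) (auto simp: lik_ratio_def)
  have "integrable M (\<lambda>x. p2 x * lik_ratio p1 p2 x powr (1/2))"
    using sq by (subst Bochner_Integration.integrable_cong[OF refl f1]) auto
  then show "integrable P2 (\<lambda>x. lik_ratio p1 p2 x powr (1/2))"
    using D2(4)[of "\<lambda>x. lik_ratio p1 p2 x powr (1/2)"] by simp
  have "(\<integral>x. lik_ratio p1 p2 x powr (1/2) \<partial>P2) = (\<integral>x. p2 x * lik_ratio p1 p2 x powr (1/2) \<partial>M)"
    using D2(5)[of "\<lambda>x. lik_ratio p1 p2 x powr (1/2)"] by simp
  also have "\<dots> = bhatt M p1 p2" unfolding r by (rule Bochner_Integration.integral_cong[OF refl f1])
  finally show "(\<integral>x. lik_ratio p1 p2 x powr (1/2) \<partial>P2) = bhatt M p1 p2" .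
  show "integrable P2 (\<lambda>x. (lik_ratio p1 p2 x powr (1/2))\<^sup>2)"
    by (subst D2(4)) (simp, subst Bochner_Integration.integrable_cong_AE[OF _ _ f2], auto simp: D1(2))
  show "(\<integral>x. (lik_ratio p1 p2 x powr (1/2))\<^sup>2 \<partial>P2) = 1"
    by (subst D2(5)) (simp, subst Bochner_Integration.integral_cong_AE[OF _ _ f2], auto simp: D1(3))
  show "integrable P2 (lik_ratio p1 p2)"
    by (subst D2(4)) (simp, subst Bochner_Integration.integrable_cong_AE[OF _ _ f3], auto simp: D1(2))
  show "(\<integral>x. lik_ratio p1 p2 x \<partial>P2) = 1"
    by (subst D2(5)) (simp, subst Bochner_Integration.integral_cong_AE[OF _ _ f3], auto simp: D1(3))
qed

lemma V2_formula:
  fixes p1 p2 :: "'a \<Rightarrow> real"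
  assumes Pac: "(p1, p2) \<in> Pac M" and N: "even N" "N > 0"
  shows "V2_bal M p1 p2 N = ennreal (4 * (1 - (bhatt M p1 p2)\<^sup>2) / real N)"
proof -
  define n where "n = N div 2"
  have n: "n > 0" "real N = 2 * real n" using N by (auto simp: n_def)
  define P1 where "P1 = density M (\<lambda>x. ennreal (p1 x))"
  define P2 where "P2 = density M (\<lambda>x. ennreal (p2 x))"
  define \<rho> where "\<rho> = bhatt M p1 p2"
  define g1 where "g1 = (\<lambda>x. lik_ratio p1 p2 x powr (-1/2))"
  define g2 where "g2 = (\<lambda>x. lik_ratio p1 p2 x powr (1/2))"
  note mo0 = moments[OF Pac, folded P1_def P2_def \<rho>_def]
  have mo: "prob_space P1" "prob_space P2" "integrable P1 g1" "integrable P1 (\<lambda>x. (g1 x)\<^sup>2)"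
    "(\<integral>x. g1 x \<partial>P1) = \<rho>" "(\<integral>x. (g1 x)\<^sup>2 \<partial>P1) = 1"
    "integrable P2 g2" "integrable P2 (\<lambda>x. (g2 x)\<^sup>2)"
    "(\<integral>x. g2 x \<partial>P2) = \<rho>" "(\<integral>x. (g2 x)\<^sup>2 \<partial>P2) = 1"
    using mo0(1-10) unfolding g1_def g2_def by auto
  interpret PP1: prob_space P1 by (rule mo(1))
  interpret PP2: prob_space P2 by (rule mo(2))
  have v1: "PP1.variance g1 = 1 - \<rho>\<^sup>2"
    using PP1.variance_eq[OF mo(3) mo(4)] mo(5,6) by simp
  have v2: "PP2.variance g2 = 1 - \<rho>\<^sup>2"
    using PP2.variance_eq[OF mo(7) mo(8)] mo(9,10) by simp
  define S1 where "S1 = (\<lambda>X. (1 / real n) * (\<Sum>i<n. g1 (X i)))"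
  define S2 where "S2 = (\<lambda>X. (1 / real n) * (\<Sum>i<n. g2 (X i)))"
  have m1: "integrable (PiM {..<n} (\<lambda>_. P1)) S1" "integrable (PiM {..<n} (\<lambda>_. P1)) (\<lambda>X. (S1 X)\<^sup>2)"
     "prob_space.variance (PiM {..<n} (\<lambda>_. P1)) S1 = PP1.variance g1 / real n"
    using iid_mean[OF mo(1) mo(3) mo(4) n(1)] unfolding S1_def by auto
  have m2: "integrable (PiM {..<n} (\<lambda>_. P2)) S2" "integrable (PiM {..<n} (\<lambda>_. P2)) (\<lambda>X. (S2 X)\<^sup>2)"
     "prob_space.variance (PiM {..<n} (\<lambda>_. P2)) S2 = PP2.variance g2 / real n"
    using iid_mean[OF mo(2) mo(7) mo(8) n(1)] unfolding S2_def by auto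
  have Q1: "prob_space (PiM {..<n} (\<lambda>_. P1))" by (rule prob_space_PiM) (use mo(1) in auto)
  have Q2: "prob_space (PiM {..<n} (\<lambda>_. P2))" by (rule prob_space_PiM) (use mo(2) in auto)
  note pv = pair_var[OF Q1 Q2 m1(1) m1(2) m2(1) m2(2)]
  have F: "(\<lambda>(X1, X2). (1 / real n) * (\<Sum>i<n. lik_ratio p1 p2 (X2 i) powr (1/2))
               - (1 / real n) * (\<Sum>i<n. lik_ratio p1 p2 (X1 i) powr (-1/2)))
        = (\<lambda>z. S2 (snd z) - S1 (fst z))"
    by (auto simp: S1_def S2_def g1_def g2_def)
  have "V2_bal M p1 p2 N = ext_variance (PiM {..<n} (\<lambda>_. P1) \<Otimes>\<^sub>M PiM {..<n} (\<lambda>_. P2)) (\<lambda>z. S2 (snd z) - S1 (fst z))"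
    unfolding V2_bal_def V2_def n_def[symmetric] iid_sample_def P1_def[symmetric] P2_def[symmetric] F ..
  also have "\<dots> = ennreal ((1 - \<rho>\<^sup>2) / real n + (1 - \<rho>\<^sup>2) / real n)"
    unfolding ext_variance_def using pv m1(3) m2(3) v1 v2 by simp
  also have "(1 - \<rho>\<^sup>2) / real n + (1 - \<rho>\<^sup>2) / real n = 4 * (1 - \<rho>\<^sup>2) / real N"
    using n by (simp add: field_simps)
  finally show ?thesis by (simp add: \<rho>_def)
qed

lemma bhatt_pos:
  fixes p1 p2 :: "'a \<Rightarrow> real"
  assumes Pac: "(p1, p2) \<in> Pac M"
  shows "bhatt M p1 p2 > 0"
proof -
  have d1: "prob_density M p1" and d2: "prob_density M p2"
    and ac: "AE x in M. p1 x = 0 \<longleftrightarrow> p2 x = 0"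
    using Pac by (auto simp: Pac_def)
  have [measurable]: "p1 \<in> borel_measurable M" "p2 \<in> borel_measurable M"
    using d1 d2 by (auto simp: prob_density_def)
  have nn1: "\<And>x. x \<in> space M \<Longrightarrow> 0 \<le> p1 x" and nn2: "\<And>x. x \<in> space M \<Longrightarrow> 0 \<le> p2 x"
    and one: "(\<integral>\<^sup>+ x. ennreal (p1 x) \<partial>M) = 1"
    using d1 d2 by (auto simp: prob_density_def)
  note sq = moments(13)[OF Pac]
  have ge: "bhatt M p1 p2 \<ge> 0" unfolding bhatt_def by (rule integral_nonneg_AE) (rule AE_I2, simp add: nn1 nn2)
  show ?thesis
  proof (rule ccontr)
    assume "\<not> bhatt M p1 p2 > 0"
    then have "(\<integral>x. sqrt (p1 x * p2 x) \<partial>M) = 0" using ge by (simp add: bhatt_def)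
    then have "AE x in M. sqrt (p1 x * p2 x) = 0"
    proof -
      have "AE x in M. 0 \<le> sqrt (p1 x * p2 x)" by (rule AE_I2) (simp add: nn1 nn2)
      then show ?thesis using integral_nonneg_eq_0_iff_AE[OF sq] \<open>(\<integral>x. sqrt (p1 x * p2 x) \<partial>M) = 0\<close> by simp
    qed
    then have "AE x in M. p1 x = 0"
      using ac by eventually_elim auto
    then have "(\<integral>\<^sup>+ x. ennreal (p1 x) \<partial>M) = (\<integral>\<^sup>+ x. 0 \<partial>M)"
      by (intro nn_integral_cong_AE) auto
    then show False using one by simp
  qed
qed

lemma iid_comp_rev:
  fixes phi :: "'a \<Rightarrow> real"
  assumes P: "prob_space P" and I: "i \<in> I" and phi: "phi \<in> borel_measurable P"
    and int: "integrable (PiM I (\<lambda>_. P)) (\<lambda>X. phi (X i))"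
  shows "integrable P phi"
proof -
  have d: "distr (PiM I (\<lambda>_. P)) P (\<lambda>X. X i) = P"
    using distr_PiM_component[of I "\<lambda>_. P" i] P I by simp
  have m: "(\<lambda>X. X i) \<in> measurable (PiM I (\<lambda>_. P)) P" using I by simp
  show ?thesis
    using integrable_distr_eq[OF m phi] d int by simp
qed

lemma V1_bound:
  fixes p1 p2 :: "'a \<Rightarrow> real"
  assumes Pac: "(p1, p2) \<in> Pac M" and N: "N > 0" and half: "bhatt M p1 p2 \<le> 1/2"
  shows "ennreal (4 * (1 - (bhatt M p1 p2)\<^sup>2) / real N) \<le> V1 M p1 p2 N"
proof -
  define P2 where "P2 = density M (\<lambda>x. ennreal (p2 x))"
  define \<rho> where "\<rho> = bhatt M p1 p2"
  define B where "B = lik_ratio p1 p2"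
  define Q where "Q = PiM {..<N} (\<lambda>_. P2)"
  define S where "S = (\<lambda>X. (1 / real N) * (\<Sum>i<N. B (X i)))"
  have d1: "prob_density M p1" and d2: "prob_density M p2"
    using Pac by (auto simp: Pac_def)
  have [measurable]: "p1 \<in> borel_measurable M" "p2 \<in> borel_measurable M"
    using d1 d2 by (auto simp: prob_density_def)
  have nn1: "\<And>x. x \<in> space M \<Longrightarrow> 0 \<le> p1 x" and nn2: "\<And>x. x \<in> space M \<Longrightarrow> 0 \<le> p2 x"
    using d1 d2 by (auto simp: prob_density_def)
  have Bm[measurable]: "B \<in> borel_measurable M"
    unfolding B_def lik_ratio_def by measurable
  have Bnn: "\<And>x. x \<in> space M \<Longrightarrow> 0 \<le> B x" using nn1 nn2 by (simp add: B_def lik_ratio_def)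
  note mo = moments[OF Pac, folded P2_def \<rho>_def B_def]
  have rpos: "\<rho> > 0" using bhatt_pos[OF Pac] by (simp add: \<rho>_def)
  interpret PP2: prob_space P2 by (rule mo(2))
  have QP: "prob_space Q" unfolding Q_def by (rule prob_space_PiM) (use mo(2) in auto)
  interpret QQ: prob_space Q by (rule QP)
  have sp2: "space P2 = space M" by (simp add: P2_def)
  have V1eq: "V1 M p1 p2 N = ext_variance Q (\<lambda>X. S X - 1)"
    unfolding V1_def iid_sample_def P2_def[symmetric] Q_def[symmetric] S_def B_def ..
  have Bi: "integrable P2 B" using mo(11) .
  have gi: "integrable Q (\<lambda>X. B (X i))" if "i < N" for i
    using iid_comp(1)[OF mo(2) _ Bi, of i "{..<N}"] that by (simp add: Q_def)
  have Si: "integrable Q S" unfolding S_def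
    using gi by (intro integrable_mult_right Bochner_Integration.integrable_sum) auto
  show ?thesis
  proof (cases "integrable P2 (\<lambda>x. (B x)\<^sup>2)")
    case False
    have "\<not> integrable Q (\<lambda>X. (S X - 1)\<^sup>2)"
    proof
      assume A: "integrable Q (\<lambda>X. (S X - 1)\<^sup>2)"
      have "(\<lambda>X. (S X)\<^sup>2) = (\<lambda>X. (S X - 1)\<^sup>2 + 2 * S X - 1)"
        by (auto simp: power2_eq_square algebra_simps)
      then have S2: "integrable Q (\<lambda>X. (S X)\<^sup>2)" using A Si by simp
      have "integrable Q (\<lambda>X. (B (X 0))\<^sup>2)"
      proof (rule Bochner_Integration.integrable_bound[of _ "\<lambda>X. (real N)\<^sup>2 * (S X)\<^sup>2"])
        show "integrable Q (\<lambda>X. (real N)\<^sup>2 * (S X)\<^sup>2)" using S2 by simp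
        show "(\<lambda>X. (B (X 0))\<^sup>2) \<in> borel_measurable Q"
        proof -
          have "(\<lambda>X. X 0) \<in> measurable Q P2" using N unfolding Q_def by simp
          moreover have "(\<lambda>x. (B x)\<^sup>2) \<in> borel_measurable P2" unfolding P2_def by simp
          ultimately show ?thesis by (rule measurable_compose)
        qed
        show "AE X in Q. norm ((B (X 0))\<^sup>2) \<le> norm ((real N)\<^sup>2 * (S X)\<^sup>2)"
        proof (rule AE_I2)
          fix X assume X: "X \<in> space Q"
          have Xi: "X i \<in> space M" if "i < N" for i
            using X that by (auto simp: Q_def space_PiM sp2)
          have b0: "0 \<le> B (X 0)" using Xi[OF N] Bnn by blast
          have "B (X 0) \<le> (\<Sum>i<N. B (X i))"
            by (rule member_le_sum) (use N Xi Bnn in auto)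
          also have "(\<Sum>i<N. B (X i)) = real N * S X" using N by (simp add: S_def)
          finally have "(B (X 0))\<^sup>2 \<le> (real N * S X)\<^sup>2" using b0 by (intro power_mono) auto
          then show "norm ((B (X 0))\<^sup>2) \<le> norm ((real N)\<^sup>2 * (S X)\<^sup>2)"
            by (simp add: power_mult_distrib)
        qed
      qed
      then have "integrable P2 (\<lambda>x. (B x)\<^sup>2)"
        using iid_comp_rev[OF mo(2), of 0 "{..<N}" "\<lambda>x. (B x)\<^sup>2"] N by (simp add: Q_def P2_def)
      then show False using False by simp
    qed
    then show ?thesis unfolding V1eq ext_variance_def by simp
  next
    case True
    have m: "integrable Q S" "integrable Q (\<lambda>X. (S X)\<^sup>2)" "(\<integral>X. S X \<partial>Q) = 1"
      "QQ.variance S = PP2.variance B / real N"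
      using iid_mean[OF mo(2) Bi True N] mo(12) unfolding S_def Q_def by auto
    have "(\<lambda>X. (S X - 1)\<^sup>2) = (\<lambda>X. (S X)\<^sup>2 - 2 * S X + 1)"
      by (auto simp: power2_eq_square algebra_simps)
    then have int1: "integrable Q (\<lambda>X. (S X - 1)\<^sup>2)" using m by simp
    have E1: "(\<integral>X. S X - 1 \<partial>Q) = 0" using m QQ.prob_space by simp
    have var1: "QQ.variance (\<lambda>X. S X - 1) = PP2.variance B / real N"
      using E1 m(3,4) by simp
    define m4 where "m4 = (\<integral>x. (B x)\<^sup>2 \<partial>P2)"
    have vB: "PP2.variance B = m4 - 1"
      using PP2.variance_eq[OF Bi True] mo(12) by (simp add: m4_def)
    define g2 where "g2 = (\<lambda>x. B x powr (1/2))"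
    have g2i: "integrable P2 g2" "(\<integral>x. g2 x \<partial>P2) = \<rho>"
      using mo(7,9) by (simp_all add: g2_def)
    have pt: "3 * \<rho> * B x \<le> 2 * g2 x + \<rho>^3 * (B x)\<^sup>2" if x: "x \<in> space P2" for x
    proof -
      have b: "0 \<le> B x" using Bnn x sp2 by auto
      have "g2 x = sqrt (B x)" using b by (simp add: g2_def powr_half_sqrt)
      then have e: "(g2 x)\<^sup>2 = B x" "(g2 x)^4 = (B x)\<^sup>2" using b
        by (simp_all add: power4_eq_xxxx power2_eq_square)
      have "3 * \<rho> * (g2 x)\<^sup>2 \<le> 2 * g2 x + \<rho>^3 * (g2 x)^4"
        by (rule pw5) (use b \<open>g2 x = sqrt (B x)\<close> rpos in auto)
      then show ?thesis using e by simp
    qed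
    have "(\<integral>x. 3 * \<rho> * B x \<partial>P2) \<le> (\<integral>x. 2 * g2 x + \<rho>^3 * (B x)\<^sup>2 \<partial>P2)"
      by (rule Bochner_Integration.integral_mono) (use Bi True g2i pt in auto)
    then have "3 * \<rho> \<le> 2 * \<rho> + \<rho>^3 * m4"
      using Bi True g2i mo(12) by (simp add: m4_def)
    then have k: "1 \<le> \<rho>\<^sup>2 * m4" using rpos
      by (simp add: power2_eq_square power3_eq_cube algebra_simps)
    have r2: "\<rho>\<^sup>2 \<le> 1/4"
    proof -
      have "\<rho> \<le> 1/2" using half by (simp add: \<rho>_def)
      then have "\<rho> * \<rho> \<le> (1/2) * (1/2)" using rpos by (intro mult_mono) auto
      then show ?thesis by (simp add: power2_eq_square)
    qed
    have r2p: "\<rho>\<^sup>2 > 0" using rpos by simp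
    have "(5 - 4 * \<rho>\<^sup>2) * \<rho>\<^sup>2 \<le> 1"
    proof -
      have h: "\<And>t::real. 0 \<le> t \<Longrightarrow> t \<le> 1/4 \<Longrightarrow> (5 - 4 * t) * t \<le> 1"
      proof -
        fix t :: real assume "0 \<le> t" "t \<le> 1/4"
        then have "0 \<le> (1 - t) * (1 - 4 * t)" by (intro mult_nonneg_nonneg) auto
        then show "(5 - 4 * t) * t \<le> 1" by (simp add: algebra_simps)
      qed
      show ?thesis using r2 r2p by (intro h) auto
    qed
    then have "(5 - 4 * \<rho>\<^sup>2) * \<rho>\<^sup>2 \<le> m4 * \<rho>\<^sup>2" using k by (simp add: mult.commute)
    then have "5 - 4 * \<rho>\<^sup>2 \<le> m4" using r2p by simp
    then have "4 * (1 - \<rho>\<^sup>2) / real N \<le> (m4 - 1) / real N"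
      using N by (simp add: divide_right_mono)
    then show ?thesis
      unfolding V1eq ext_variance_def using int1 var1 vB by (simp add: \<rho>_def[symmetric] ennreal_leI)
  qed
qed


theorem theorem3:
  fixes M :: "'a measure" and p1 p2 :: "'a \<Rightarrow> real" and N :: nat
  assumes "sigma_finite_measure M"
    and "(p1, p2) \<in> Pac M"
    and "even N" and "N > 0"
  shows "V2_bal M p1 p2 N = ennreal (4 * (1 - (bhatt M p1 p2)\<^sup>2) / real N)
         \<and> (SUP q \<in> Pac M. V2_bal M (fst q) (snd q) N) \<le> ennreal (4 / real N)
         \<and> (SUP q \<in> Pac M. V2_bal M (fst q) (snd q) N) < \<infinity>
         \<and> (bhatt M p1 p2 \<le> 1/2 \<longrightarrow> V2_bal M p1 p2 N \<le> V1 M p1 p2 N)"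
proof -
  have eq: "V2_bal M p1 p2 N = ennreal (4 * (1 - (bhatt M p1 p2)\<^sup>2) / real N)"
    by (rule V2_formula[OF assms(2-4)])
  have sup: "(SUP q \<in> Pac M. V2_bal M (fst q) (snd q) N) \<le> ennreal (4 / real N)"
  proof (rule SUP_least)
    fix q assume q: "q \<in> Pac M"
    obtain a b where ab: "q = (a, b)" by (cases q)
    have "V2_bal M a b N = ennreal (4 * (1 - (bhatt M a b)\<^sup>2) / real N)"
      using V2_formula[of a b M N] q ab assms(3,4) by simp
    also have "\<dots> \<le> ennreal (4 / real N)"
      using assms(4) by (intro ennreal_leI divide_right_mono) auto
    finally show "V2_bal M (fst q) (snd q) N \<le> ennreal (4 / real N)" by (simp add: ab)
  qed
  have fin: "(SUP q \<in> Pac M. V2_bal M (fst q) (snd q) N) < \<infinity>"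
    using sup by (rule le_less_trans) simp
  have "bhatt M p1 p2 \<le> 1/2 \<longrightarrow> V2_bal M p1 p2 N \<le> V1 M p1 p2 N"
    using V1_bound[OF assms(2) assms(4)] eq by simp
  then show ?thesis using eq sup fin by blast
qed

end
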